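(* Let $G=(V,E)$ be a finite graph with special vertex $i$, symmetric edge weights $w_E$ (with $w_E(u,v)=0$ for $uv\notin E$) and vertex weights $w_V$ (nonnegative, not identically zero), such that $G$ and $G-i$ are each positively connected. Let $f_i$ be a solution of $$\min_{\|g\|_w=1,\ g(i)=0}\ \sum_{jk\in E} w_E(j,k)\,(g(k)-g(j))^2,$$ positive on $V\setminus\{i\}$. Fix vertices $j,k$ such that $G-j$ is not connected and $i$ and $k$ lie in different components of $G-j$, and suppose $w_V(k)>0$. Then $f_i(k)>f_i(j)$. Moreover, the spectral path from $k$ to $i$ passes through $j$.
   Context: $\|g\|_w=\sqrt{\sum_{u\in V}w_V(u)g(u)^2}$; each edge is counted once. A weighted graph is positively connected if any two vertices are joined by a path of positive-weight edges; $G-x$ is $G$ with vertex $x$ deleted. Edges of weight zero are regarded as deleted, so neighborhoods $N(u)$, paths and connectivity refer to positive-weight edges. The spectral path from $k$ to $i$ is the sequence $k=k_0,k_1,\dots$ where $k_{\ell+1}$ is a neighbor of $k_\ell$ minimizing $f_i$ over $N(k_\ell)$ (ties broken arbitrarily), stopped when $i$ is reached; under the hypotheses it is well-defined, with $f_i$ strictly decreasing along it. *)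

theory Defs
  imports Main "HOL-Library.Extended_Real" Complex_Main
begin

text \<open>Weighted graph on a finite vertex set V. Edge weights wE (symmetric, nonnegative);
  edges of weight zero are regarded as deleted. Self-loops are never neighbours.\<close>

definition pos_adj :: "('a \<Rightarrow> 'a \<Rightarrow> real) \<Rightarrow> 'a set \<Rightarrow> 'a \<Rightarrow> 'a \<Rightarrow> bool" where
  "pos_adj wE S u v \<longleftrightarrow> u \<in> S \<and> v \<in> S \<and> u \<noteq> v \<and> wE u v > 0"

definition nbrs :: "('a \<Rightarrow> 'a \<Rightarrow> real) \<Rightarrow> 'a set \<Rightarrow> 'a \<Rightarrow> 'a set" where
  "nbrs wE V u = {v. pos_adj wE V u v}"

definition pos_reach :: "('a \<Rightarrow> 'a \<Rightarrow> real) \<Rightarrow> 'a set \<Rightarrow> 'a \<Rightarrow> 'a \<Rightarrow> bool" where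
  "pos_reach wE S u v \<longleftrightarrow> (pos_adj wE S)\<^sup>*\<^sup>* u v"

definition pos_connected :: "('a \<Rightarrow> 'a \<Rightarrow> real) \<Rightarrow> 'a set \<Rightarrow> bool" where
  "pos_connected wE S \<longleftrightarrow> (\<forall>u\<in>S. \<forall>v\<in>S. pos_reach wE S u v)"

definition wnorm :: "('a \<Rightarrow> real) \<Rightarrow> 'a set \<Rightarrow> ('a \<Rightarrow> real) \<Rightarrow> real" where
  "wnorm wV V g = sqrt (\<Sum>u\<in>V. wV u * (g u)\<^sup>2)"

text \<open>Dirichlet energy, each edge counted once (symmetric weights: half of the ordered double sum;
  loop terms vanish).\<close>
definition energy :: "('a \<Rightarrow> 'a \<Rightarrow> real) \<Rightarrow> 'a set \<Rightarrow> ('a \<Rightarrow> real) \<Rightarrow> real" where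
  "energy wE V g = (1/2) * (\<Sum>j\<in>V. \<Sum>k\<in>V. wE j k * (g k - g j)\<^sup>2)"

definition is_minimizer :: "('a \<Rightarrow> 'a \<Rightarrow> real) \<Rightarrow> ('a \<Rightarrow> real) \<Rightarrow> 'a set \<Rightarrow> 'a \<Rightarrow> ('a \<Rightarrow> real) \<Rightarrow> bool" where
  "is_minimizer wE wV V i f \<longleftrightarrow>
     wnorm wV V f = 1 \<and> f i = 0 \<and>
     (\<forall>g. wnorm wV V g = 1 \<and> g i = 0 \<longrightarrow> energy wE V f \<le> energy wE V g)"

definition spectral_seq :: "('a \<Rightarrow> 'a \<Rightarrow> real) \<Rightarrow> 'a set \<Rightarrow> ('a \<Rightarrow> real) \<Rightarrow> 'a \<Rightarrow> 'a \<Rightarrow> (nat \<Rightarrow> 'a) \<Rightarrow> bool" where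
  "spectral_seq wE V f k i s \<longleftrightarrow> s 0 = k \<and>
     (\<forall>l. s l \<noteq> i \<longrightarrow> s (Suc l) \<in> nbrs wE V (s l) \<and>
                        (\<forall>v\<in>nbrs wE V (s l). f (s (Suc l)) \<le> f v))"

definition path_passes :: "'a \<Rightarrow> 'a \<Rightarrow> (nat \<Rightarrow> 'a) \<Rightarrow> bool" where
  "path_passes i j s \<longleftrightarrow> (\<exists>n m. s n = i \<and> (\<forall>l<n. s l \<noteq> i) \<and> m \<le> n \<and> s m = j)"

end

theory Submission
  imports Defs
begin


lemma quad_zero:
  fixes a b :: real
  assumes H: "\<And>t. t * a + t\<^sup>2 * b \<le> 0"
  shows "a = 0"
proof -
  define c where "c = \<bar>b\<bar> + 1"
  have c: "c > 0" "c + b \<ge> 1" unfolding c_def by auto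
  have "(a / c) * a + (a / c)\<^sup>2 * b \<le> 0" using H .
  hence "((a / c) * a + (a / c)\<^sup>2 * b) * c\<^sup>2 \<le> 0"
    by (simp add: mult_nonpos_nonneg)
  moreover have "((a / c) * a + (a / c)\<^sup>2 * b) * c\<^sup>2 = a\<^sup>2 * (c + b)"
    using c by (simp add: field_simps power2_eq_square)
  ultimately have "a\<^sup>2 * (c + b) \<le> 0" by simp
  moreover have "a\<^sup>2 * (c + b) \<ge> a\<^sup>2" using c
    by (metis mult.right_neutral mult_left_mono zero_le_power2)
  ultimately have "a\<^sup>2 \<le> 0" by linarith
  thus ?thesis by simp
qed

definition Nsq :: "('a \<Rightarrow> real) \<Rightarrow> 'a set \<Rightarrow> ('a \<Rightarrow> real) \<Rightarrow> real" where
  "Nsq wV V g = (\<Sum>u\<in>V. wV u * (g u)\<^sup>2)"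

lemma energy_nonneg:
  assumes "\<And>u v. wE u v \<ge> 0"
  shows "energy wE V g \<ge> 0"
  unfolding energy_def using assms
  by (intro mult_nonneg_nonneg sum_nonneg) auto

lemma energy_scale:
  "energy wE V (\<lambda>x. g x / c) = energy wE V g / c\<^sup>2"
  unfolding energy_def
  by (simp add: sum_divide_distrib power_divide diff_divide_distrib[symmetric] mult.commute)

lemma Nsq_scale:
  "Nsq wV V (\<lambda>x. g x / c) = Nsq wV V g / c\<^sup>2"
  unfolding Nsq_def
  by (simp add: sum_divide_distrib power_divide)

lemma min_ineq:
  assumes wE_nonneg: "\<And>u v. wE u v \<ge> 0"
    and wV_nonneg: "\<And>u. u \<in> V \<Longrightarrow> wV u \<ge> 0"
    and fmin: "is_minimizer wE wV V i f" and gi: "g i = 0"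
  shows "energy wE V f * Nsq wV V g \<le> energy wE V g"
proof (cases "Nsq wV V g = 0")
  case True
  then show ?thesis using energy_nonneg[OF wE_nonneg] by simp
next
  case False
  have N0: "Nsq wV V g \<ge> 0" unfolding Nsq_def using wV_nonneg by (intro sum_nonneg) auto
  hence Np: "Nsq wV V g > 0" using False by simp
  define c where "c = sqrt (Nsq wV V g)"
  have c: "c > 0" "c\<^sup>2 = Nsq wV V g" unfolding c_def using Np by auto
  have "wnorm wV V (\<lambda>x. g x / c) = 1"
    using c Nsq_scale[of wV V g c] False unfolding wnorm_def Nsq_def by simp
  moreover have "(\<lambda>x. g x / c) i = 0" using gi by simp
  ultimately have "energy wE V f \<le> energy wE V (\<lambda>x. g x / c)"
    using fmin unfolding is_minimizer_def by blast
  also have "\<dots> = energy wE V g / Nsq wV V g" using energy_scale c by metis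
  finally show ?thesis using Np by (simp add: field_simps)
qed



lemma energy_expand:
  "energy wE V (\<lambda>x. f x + t * h x) = energy wE V f
     + t * (\<Sum>j\<in>V. \<Sum>k\<in>V. wE j k * (f k - f j) * (h k - h j)) + t\<^sup>2 * energy wE V h"
proof -
  have e: "\<And>j k. wE j k * ((f k + t * h k) - (f j + t * h j))\<^sup>2 = wE j k * (f k - f j)\<^sup>2
     + 2 * t * (wE j k * (f k - f j) * (h k - h j)) + t\<^sup>2 * (wE j k * (h k - h j)\<^sup>2)"
    by (simp add: power2_eq_square algebra_simps)
  have "(\<Sum>j\<in>V. \<Sum>k\<in>V. wE j k * ((f k + t * h k) - (f j + t * h j))\<^sup>2)
     = (\<Sum>j\<in>V. \<Sum>k\<in>V. wE j k * (f k - f j)\<^sup>2)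
     + 2 * t * (\<Sum>j\<in>V. \<Sum>k\<in>V. wE j k * (f k - f j) * (h k - h j))
     + t\<^sup>2 * (\<Sum>j\<in>V. \<Sum>k\<in>V. wE j k * (h k - h j)\<^sup>2)"
    by (simp only: e sum.distrib sum_distrib_left)
  then show ?thesis unfolding energy_def
    by (simp add: algebra_simps)
qed

lemma Nsq_expand:
  "Nsq wV V (\<lambda>x. f x + t * h x) = Nsq wV V f
     + 2 * t * (\<Sum>u\<in>V. wV u * f u * h u) + t\<^sup>2 * Nsq wV V h"
proof -
  have "\<And>u. wV u * (f u + t * h u)\<^sup>2 = wV u * (f u)\<^sup>2 + 2 * t * (wV u * f u * h u)
     + t\<^sup>2 * (wV u * (h u)\<^sup>2)"
    by (simp add: power2_eq_square algebra_simps)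
  then show ?thesis unfolding Nsq_def
    by (simp add: sum.distrib sum_distrib_left algebra_simps)
qed

lemma EL_general:
  assumes wE_nonneg: "\<And>u v. wE u v \<ge> 0"
    and wV_nonneg: "\<And>u. u \<in> V \<Longrightarrow> wV u \<ge> 0"
    and fmin: "is_minimizer wE wV V i f" and hi: "h i = 0"
  shows "2 * energy wE V f * (\<Sum>u\<in>V. wV u * f u * h u)
         = (\<Sum>j\<in>V. \<Sum>k\<in>V. wE j k * (f k - f j) * (h k - h j))"
proof -
  have N1: "Nsq wV V f = 1"
    using fmin unfolding is_minimizer_def wnorm_def Nsq_def by simp
  have fi: "f i = 0" using fmin unfolding is_minimizer_def by simp
  define P where "P = (\<Sum>u\<in>V. wV u * f u * h u)"
  define B where "B = (\<Sum>j\<in>V. \<Sum>k\<in>V. wE j k * (f k - f j) * (h k - h j))"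
  define Ef where "Ef = energy wE V f"
  have "\<And>t. t * (2 * Ef * P - B) + t\<^sup>2 * (Ef * Nsq wV V h - energy wE V h) \<le> 0"
  proof -
    fix t :: real
    have "Ef * Nsq wV V (\<lambda>x. f x + t * h x) \<le> energy wE V (\<lambda>x. f x + t * h x)"
      unfolding Ef_def using min_ineq[OF wE_nonneg wV_nonneg fmin] fi hi by simp
    thus "t * (2 * Ef * P - B) + t\<^sup>2 * (Ef * Nsq wV V h - energy wE V h) \<le> 0"
      unfolding energy_expand Nsq_expand N1 P_def[symmetric] B_def[symmetric] Ef_def[symmetric]
      by (simp add: algebra_simps)
  qed
  from quad_zero[OF this] show ?thesis unfolding P_def B_def Ef_def by simp
qed

lemma EL_vertex:
  assumes finV: "finite V"
    and wE_sym: "\<And>u v. wE u v = wE v u"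
    and wE_nonneg: "\<And>u v. wE u v \<ge> 0"
    and wV_nonneg: "\<And>u. u \<in> V \<Longrightarrow> wV u \<ge> 0"
    and fmin: "is_minimizer wE wV V i f" and uV: "u \<in> V" and ui: "u \<noteq> i"
  shows "energy wE V f * wV u * f u = (\<Sum>v\<in>V. wE u v * (f u - f v))"
proof -
  define h where "h = (\<lambda>x. if x = u then (1::real) else 0)"
  have hi: "h i = 0" using ui unfolding h_def by simp
  have L: "(\<Sum>x\<in>V. wV x * f x * h x) = wV u * f u"
    unfolding h_def using finV uV by (simp add: if_distrib cong: if_cong)
  have "(\<Sum>j\<in>V. \<Sum>k\<in>V. wE j k * (f k - f j) * (h k - h j))
      = (\<Sum>j\<in>V. \<Sum>k\<in>V. wE j k * (f k - f j) * h k) - (\<Sum>j\<in>V. \<Sum>k\<in>V. wE j k * (f k - f j) * h j)"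
    by (simp add: right_diff_distrib sum_subtractf)
  also have "(\<Sum>j\<in>V. \<Sum>k\<in>V. wE j k * (f k - f j) * h k) = (\<Sum>j\<in>V. wE j u * (f u - f j))"
    unfolding h_def using finV uV by (simp add: if_distrib cong: if_cong)
  also have "(\<Sum>j\<in>V. \<Sum>k\<in>V. wE j k * (f k - f j) * h j) = (\<Sum>j\<in>V. h j * (\<Sum>k\<in>V. wE j k * (f k - f j)))"
    by (simp add: sum_distrib_left mult.commute)
  also have "\<dots> = (\<Sum>k\<in>V. wE u k * (f k - f u))"
    unfolding h_def using finV uV
    by (simp add: if_distrib[of "\<lambda>x. x * _"] cong: if_cong)
  also have "(\<Sum>j\<in>V. wE j u * (f u - f j)) - (\<Sum>k\<in>V. wE u k * (f k - f u))
      = 2 * (\<Sum>v\<in>V. wE u v * (f u - f v))"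
    by (simp add: wE_sym[of _ u] sum_subtractf[symmetric] sum_distrib_left algebra_simps)
  finally show ?thesis using EL_general[of wE V wV i f h, OF wE_nonneg wV_nonneg fmin hi] L by simp
qed



lemma reach_sym:
  assumes wE_sym: "\<And>u v. wE u v = wE v u" and r: "pos_reach wE S u v"
  shows "pos_reach wE S v u"
proof -
  have "(pos_adj wE S)\<^sup>*\<^sup>* u v" using r unfolding pos_reach_def .
  then have "(pos_adj wE S)\<^sup>*\<^sup>* v u"
  proof (induction rule: rtranclp_induct)
    case base then show ?case by simp
  next
    case (step y z)
    have "pos_adj wE S z y" using step(2) wE_sym unfolding pos_adj_def by auto
    then show ?case using step(3) by (rule converse_rtranclp_into_rtranclp)
  qed
  then show ?thesis unfolding pos_reach_def .
qed

theorem theorem10: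
  fixes V :: "'a set" and wE :: "'a \<Rightarrow> 'a \<Rightarrow> real" and wV :: "'a \<Rightarrow> real"
    and f :: "'a \<Rightarrow> real" and i j k :: 'a
  assumes finV: "finite V" and iV: "i \<in> V"
    and wE_sym: "\<And>u v. wE u v = wE v u"
    and wE_nonneg: "\<And>u v. wE u v \<ge> 0"
    and wV_nonneg: "\<And>u. u \<in> V \<Longrightarrow> wV u \<ge> 0"
    and wV_nonzero: "\<exists>u\<in>V. wV u \<noteq> 0"
    and connG: "pos_connected wE V"
    and connGi: "pos_connected wE (V - {i})"
    and fmin: "is_minimizer wE wV V i f"
    and fpos: "\<And>u. u \<in> V - {i} \<Longrightarrow> f u > 0"
    and jV: "j \<in> V" and kV: "k \<in> V"
    and Gj_disconn: "\<not> pos_connected wE (V - {j})"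
    and ij: "i \<noteq> j" and kj: "k \<noteq> j"
    and sep: "\<not> pos_reach wE (V - {j}) i k"
    and wVk: "wV k > 0"
  shows "f k > f j \<and> (\<forall>s. spectral_seq wE V f k i s \<longrightarrow> path_passes i j s)"
proof -
  have fi: "f i = 0" using fmin unfolding is_minimizer_def by simp
  have ki: "k \<noteq> i" using sep unfolding pos_reach_def by auto
  have EL: "\<And>u. u \<in> V \<Longrightarrow> u \<noteq> i \<Longrightarrow>
      energy wE V f * wV u * f u = (\<Sum>v\<in>V. wE u v * (f u - f v))"
    using EL_vertex[OF finV wE_sym wE_nonneg wV_nonneg fmin] by blast
  define lam where "lam = energy wE V f"
  have lam_pos: "lam > 0"
  proof (rule ccontr)
    assume "\<not> lam > 0"
    hence l0: "lam = 0" using energy_nonneg[of wE V f, OF wE_nonneg] unfolding lam_def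
      by linarith
    have "(\<Sum>a\<in>V. \<Sum>b\<in>V. wE a b * (f b - f a)\<^sup>2) = 0"
      using l0 unfolding lam_def energy_def by simp
    hence z: "\<forall>a\<in>V. (\<Sum>b\<in>V. wE a b * (f b - f a)\<^sup>2) = 0"
      using finV wE_nonneg by (subst (asm) sum_nonneg_eq_0_iff) (auto intro!: sum_nonneg)
    have adj_eq: "f a = f b" if "pos_adj wE V a b" for a b
    proof -
      have ab: "a \<in> V" "b \<in> V" "wE a b > 0" using that unfolding pos_adj_def by auto
      have "(\<Sum>b\<in>V. wE a b * (f b - f a)\<^sup>2) = 0" using z ab by blast
      hence "\<forall>c\<in>V. wE a c * (f c - f a)\<^sup>2 = 0"
        using finV wE_nonneg by (subst (asm) sum_nonneg_eq_0_iff) auto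
      hence "wE a b * (f b - f a)\<^sup>2 = 0" using ab by blast
      thus ?thesis using ab by simp
    qed
    have "(pos_adj wE V)\<^sup>*\<^sup>* i k" using connG iV kV unfolding pos_connected_def pos_reach_def by blast
    hence "f k = f i"
    proof (induction rule: rtranclp_induct)
      case base then show ?case by simp
    next
      case (step y z) then show ?case using adj_eq[of y z] by simp
    qed
    thus False using fi fpos[of k] kV ki by simp
  qed
  have part1: "f k > f j"
  proof (rule ccontr)
    assume "\<not> f k > f j"
    hence kjle: "f k \<le> f j" by simp
    define C where "C = {v. pos_reach wE (V - {j}) k v}"
    have kC: "k \<in> C" unfolding C_def pos_reach_def by simp
    have CV: "C \<subseteq> V - {j}"
    proof
      fix v assume "v \<in> C"
      hence "(pos_adj wE (V - {j}))\<^sup>*\<^sup>* k v" unfolding C_def pos_reach_def by simp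
      thus "v \<in> V - {j}"
        by (induction rule: rtranclp_induct) (use kV kj in \<open>auto simp: pos_adj_def\<close>)
    qed
    have iC: "i \<notin> C" using sep reach_sym[of wE, OF wE_sym] unfolding C_def by blast
    have finC: "finite C" using CV finV by (meson finite_Diff finite_subset)
    define mu where "mu = Min (f ` C)"
    obtain u0 where u0: "u0 \<in> C" "f u0 = mu"
    proof -
      have "Min (f ` C) \<in> f ` C" using finC kC by (intro Min_in) auto
      thus ?thesis using that unfolding mu_def by auto
    qed
    have mule: "\<And>v. v \<in> C \<Longrightarrow> mu \<le> f v" unfolding mu_def using finC by simp
    have claim: "wV v = 0 \<and> (\<forall>w. pos_adj wE (V - {j}) v w \<longrightarrow> f w = mu)"
      if vC: "v \<in> C" and fv: "f v = mu" for v
    proof -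
      have vV: "v \<in> V" "v \<noteq> i" "v \<noteq> j" using vC CV iC by auto
      have terms: "wE v w * (f v - f w) \<le> 0" if wV': "w \<in> V" for w
      proof (cases "wE v w > 0")
        case False then show ?thesis using wE_nonneg[of v w] by simp
      next
        case True
        have "f w \<ge> mu"
        proof (cases "w = j")
          case True then show ?thesis using kjle mule[OF kC] by simp
        next
          case False
          show ?thesis
          proof (cases "w = v")
            case True then show ?thesis using fv by simp
          next
            case wv: False
            have "pos_adj wE (V - {j}) v w" using True False wv vV wV' unfolding pos_adj_def by auto
            hence "w \<in> C" using vC unfolding C_def pos_reach_def
              by (simp add: rtranclp.rtrancl_into_rtrancl)
            then show ?thesis using mule by simp
          qed
        qed
        then show ?thesis using fv wE_nonneg[of v w] by (simp add: mult_nonneg_nonpos)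
      qed
      have lhs: "lam * wV v * f v \<ge> 0"
        using lam_pos wV_nonneg[of v] fpos[of v] vV by simp
      have "(\<Sum>w\<in>V. wE v w * (f v - f w)) \<le> 0" using terms by (simp add: sum_nonpos)
      hence s0: "(\<Sum>w\<in>V. wE v w * (f v - f w)) = 0" and l0: "lam * wV v * f v = 0"
        using EL[OF vV(1,2)] lhs unfolding lam_def by linarith+
      have "(\<Sum>w\<in>V. - (wE v w * (f v - f w))) = 0" using s0 by (simp add: sum_negf)
      hence allz: "\<forall>w\<in>V. - (wE v w * (f v - f w)) = 0"
        using finV terms by (subst (asm) sum_nonneg_eq_0_iff) auto
      have "wV v = 0" using l0 lam_pos fpos[of v] vV by simp
      moreover have "\<forall>w. pos_adj wE (V - {j}) v w \<longrightarrow> f w = mu"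
      proof (intro allI impI)
        fix w assume "pos_adj wE (V - {j}) v w"
        hence w: "w \<in> V" "wE v w > 0" unfolding pos_adj_def by auto
        have "wE v w * (f v - f w) = 0" using allz w(1) by simp
        then show "f w = mu" using w(2) fv by simp
      qed
      ultimately show ?thesis by blast
    qed
    have "pos_reach wE (V - {j}) k u0" using u0(1) unfolding C_def by simp
    hence "pos_reach wE (V - {j}) u0 k" by (rule reach_sym[of wE, OF wE_sym])
    hence "(pos_adj wE (V - {j}))\<^sup>*\<^sup>* u0 k" unfolding pos_reach_def .
    hence "k \<in> C \<and> f k = mu"
    proof (induction rule: rtranclp_induct)
      case base then show ?case using u0 by simp
    next
      case (step y z)
      have yC: "y \<in> C" and fy: "f y = mu" using step.IH by auto
      have "(pos_adj wE (V - {j}))\<^sup>*\<^sup>* k y" using yC unfolding C_def pos_reach_def by simp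
      hence "(pos_adj wE (V - {j}))\<^sup>*\<^sup>* k z" using step(2) by (rule rtranclp.rtrancl_into_rtrancl)
      hence "z \<in> C" unfolding C_def pos_reach_def by simp
      moreover have "f z = mu" using claim[OF yC fy] step(2) by blast
      ultimately show ?case by blast
    qed
    hence "wV k = 0" using claim[of k] by simp
    thus False using wVk by simp
  qed
  have decrease: "\<exists>w\<in>nbrs wE V u. f w < f u"
    if uV: "u \<in> V" "u \<noteq> i" and good: "wV u > 0 \<or> (\<exists>w\<in>V. wE u w > 0 \<and> f w > f u)" for u
  proof (rule ccontr)
    assume "\<not> (\<exists>w\<in>nbrs wE V u. f w < f u)"
    hence nb: "\<And>w. w \<in> V \<Longrightarrow> w \<noteq> u \<Longrightarrow> wE u w > 0 \<Longrightarrow> f w \<ge> f u"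
    proof -
      fix w assume "w \<in> V" "w \<noteq> u" "wE u w > 0"
      hence "w \<in> nbrs wE V u" unfolding nbrs_def pos_adj_def using uV by simp
      thus "f w \<ge> f u" using \<open>\<not> (\<exists>w\<in>nbrs wE V u. f w < f u)\<close> by (meson not_le)
    qed
    have terms: "wE u w * (f u - f w) \<le> 0" if "w \<in> V" for w
    proof (cases "wE u w > 0 \<and> w \<noteq> u")
      case True then show ?thesis using nb[of w] that by (simp add: mult_nonneg_nonpos)
    next
      case False then show ?thesis using wE_nonneg[of u w] by auto
    qed
    have S: "lam * wV u * f u = (\<Sum>w\<in>V. wE u w * (f u - f w))"
      using EL[OF uV] unfolding lam_def .
    show False
    proof (cases "wV u > 0")
      case True
      hence "lam * wV u * f u > 0" using lam_pos fpos[of u] uV by simp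
      moreover have "(\<Sum>w\<in>V. wE u w * (f u - f w)) \<le> 0" using terms by (simp add: sum_nonpos)
      ultimately show False using S by linarith
    next
      case False
      then obtain w0 where w0: "w0 \<in> V" "wE u w0 > 0" "f w0 > f u" using good by auto
      have neg: "wE u w0 * (f u - f w0) < 0" using w0 by (simp add: mult_pos_neg)
      have "- (wE u w0 * (f u - f w0)) \<le> (\<Sum>w\<in>V. - (wE u w * (f u - f w)))"
        by (rule member_le_sum) (use w0 terms finV in auto)
      hence "(\<Sum>w\<in>V. wE u w * (f u - f w)) < 0" using neg by (simp add: sum_negf)
      moreover have "lam * wV u * f u \<ge> 0" using lam_pos wV_nonneg[of u] fpos[of u] uV by simp
      ultimately show False using S by linarith
    qed
  qed
  have part2: "path_passes i j s" if ss: "spectral_seq wE V f k i s" for s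
  proof -
    have s0: "s 0 = k" using ss unfolding spectral_seq_def by simp
    have sstep: "\<And>l. s l \<noteq> i \<Longrightarrow> s (Suc l) \<in> nbrs wE V (s l) \<and>
                        (\<forall>v\<in>nbrs wE V (s l). f (s (Suc l)) \<le> f v)"
      using ss unfolding spectral_seq_def by blast
    define Q where "Q = (\<lambda>u. u \<in> V \<and> (wV u > 0 \<or> (\<exists>w\<in>V. wE u w > 0 \<and> f w > f u)))"
    have Qstep: "Q (s (Suc l)) \<and> f (s (Suc l)) < f (s l)" if Ql: "Q (s l)" "s l \<noteq> i" for l
    proof -
      have sl: "s l \<in> V" using Ql unfolding Q_def by simp
      obtain w where w: "w \<in> nbrs wE V (s l)" "f w < f (s l)"
        using decrease[of "s l"] Ql unfolding Q_def by blast
      have n: "s (Suc l) \<in> nbrs wE V (s l)" and mn: "f (s (Suc l)) \<le> f w"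
        using sstep[OF Ql(2)] w by auto
      have "s (Suc l) \<in> V" "wE (s (Suc l)) (s l) > 0"
        using n wE_sym unfolding nbrs_def pos_adj_def by auto
      then show ?thesis unfolding Q_def using sl mn w by auto
    qed
    have Qall: "\<forall>m<l. s m \<noteq> i \<Longrightarrow> Q (s l)" for l
    proof (induction l)
      case 0 then show ?case using s0 kV wVk unfolding Q_def by simp
    next
      case (Suc l)
      have "Q (s l)" using Suc by simp
      moreover have "s l \<noteq> i" using Suc.prems by simp
      ultimately show ?case using Qstep by blast
    qed
    have "\<exists>n. s n = i"
    proof (rule ccontr)
      assume "\<not> (\<exists>n. s n = i)"
      hence ni: "\<And>n. s n \<noteq> i" by blast
      have dec: "\<And>l. - f (s l) < - f (s (Suc l))" proof -
        fix l
        have "Q (s l)" by (rule Qall) (simp add: ni)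
        thus "- f (s l) < - f (s (Suc l))" using Qstep ni by simp
      qed
      have inj: "inj s"
      proof (rule injI)
        fix a b assume ab: "s a = s b"
        show "a = b"
        proof (rule ccontr)
          assume "a \<noteq> b"
          hence "a < b \<or> b < a" by arith
          thus False
          proof
            assume "a < b" thus False using lift_Suc_mono_less[of "\<lambda>l. - f (s l)", OF dec] ab by fastforce
          next
            assume "b < a" thus False using lift_Suc_mono_less[of "\<lambda>l. - f (s l)", OF dec] ab by fastforce
          qed
        qed
      qed
      have "range s \<subseteq> V" using Qall ni unfolding Q_def by auto
      hence "finite (range s)" using finV finite_subset by blast
      hence "finite (UNIV :: nat set)" using inj finite_imageD by blast
      thus False by simp
    qed
    then obtain n where n: "s n = i" "\<forall>l<n. s l \<noteq> i"
      using exists_least_iff[of "\<lambda>n. s n = i"] by blast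
    show ?thesis
    proof (rule ccontr)
      assume "\<not> path_passes i j s"
      hence nj: "\<forall>m\<le>n. s m \<noteq> j" using n unfolding path_passes_def by blast
      have "l \<le> n \<Longrightarrow> (pos_adj wE (V - {j}))\<^sup>*\<^sup>* k (s l)" for l
      proof (induction l)
        case 0 then show ?case using s0 by simp
      next
        case (Suc l)
        have "s l \<noteq> i" using n Suc by simp
        hence "pos_adj wE V (s l) (s (Suc l))" using sstep unfolding nbrs_def by blast
        hence "pos_adj wE (V - {j}) (s l) (s (Suc l))" using nj Suc unfolding pos_adj_def by auto
        then show ?case using Suc by (simp add: rtranclp.rtrancl_into_rtrancl)
      qed
      hence "pos_reach wE (V - {j}) k i" using n unfolding pos_reach_def by (metis order_refl)
      thus False using sep reach_sym[of wE, OF wE_sym] by blast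
    qed
  qed
  show ?thesis using part1 part2 by blast
qed

end
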